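(* Let $f:E\to\mathbb{R}$ be convex (or continuously differentiable and $1$-weakly-quasi-convex) with a minimizer $x_*$, let $\varepsilon>0$ and let $\Theta\ge V(x_*,x^0)$. Then the iterates of Algorithm UAGMsDR with accuracy $\varepsilon$ satisfy, for every $k\ge1$, $$f(x^k)-f(x_* )\le\frac{V(x_*,x^0)}{A_k}+\frac\varepsilon2.$$ Moreover, for every $\nu\in[0,1]$ with $M_\nu<\infty$ and every integer $$N\ge 2^{\frac{2+4\nu}{1+3\nu}}\left[\frac{1-\nu}{1+\nu}\right]^{\frac{1-\nu}{1+3\nu}}\left[\frac{M_\nu}{\varepsilon}\right]^{\frac{2}{1+3\nu}}\Theta^{\frac{1+\nu}{1+3\nu}}$$ (with the factor $\left[\frac{1-\nu}{1+\nu}\right]^{\frac{1-\nu}{1+3\nu}}$ interpreted as $1$ when $\nu=1$), one has $f(x^N)-f(x_* )\le\varepsilon$.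
   Context: $E$ is a finite-dimensional real vector space with a norm $\|\cdot\|$; $E^*$ is its dual, $\langle g,x\rangle$ denotes the value of $g\in E^*$ at $x\in E$, and $\|g\|_*=\max\{\langle g,x\rangle:\|x\|\le 1\}$. For $g\in E^*$, $g^{\#}$ denotes a (fixed) element $s\in E$ with $\|s\|\le 1$ and $\langle g,s\rangle=\|g\|_*$. A prox-function $d:E\to\mathbb{R}$ is continuously differentiable, convex, $1$-strongly convex with respect to $\|\cdot\|$ and satisfies $\min_E d=0$; its Bregman divergence is $V(x,z)=d(x)-d(z)-\langle\nabla d(z),x-z\rangle$. $\nabla f(x)$ denotes the gradient of $f$ if $f$ is differentiable and otherwise a subgradient of the convex function $f$ (as selected by the algorithm). For $\nu\in[0,1]$, $M_\nu\in(0,+\infty]$ denotes the smallest constant such that $\|\nabla f(x)-\nabla f(y)\|_*\le M_\nu\|x-y\|^\nu$ for all $x,y\in E$ ($M_\nu=+\infty$ if no such constant exists). A differentiable $f$ with minimizer $x_*$ is $1$-weakly-quasi-convex if $f(x)-f(x_* )\le\langle\nabla f(x),x-x_*\rangle$ for all $x$. Algorithm UAGMsDR (input $x^0\in E$, accuracy $\varepsilon>0$): set $A_0=0$, $v^0=x^0$, $\psi_0(x)=V(x,x^0)$. For $k=0,1,2,\dots$: 1. Choose $\beta_k\in\arg\min_{\beta\in[0,1]}f(v^k+\beta(x^k-v^k))$, set $y^k=v^k+\beta_k(x^k-v^k)$, and choose $\nabla f(y^k)$ (the gradient, or a subgradient in the convex nonsmooth case) such that $\langle\nabla f(y^k),v^k-y^k\rangle\ge0$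 (such a choice exists by optimality of $\beta_k$). 2. $h_{k+1}\in\arg\min_{h\ge0}f(y^k-h(\nabla f(y^k))^{\#})$, $x^{k+1}=y^k-h_{k+1}(\nabla f(y^k))^{\#}$; $a_{k+1}$ is the largest solution of $f(y^k)-\frac{a_{k+1}^2}{2(A_k+a_{k+1})}\|\nabla f(y^k)\|_*^2+\frac{\varepsilon a_{k+1}}{2(A_k+a_{k+1})}=f(x^{k+1})$. 3. $A_{k+1}=A_k+a_{k+1}$; $\psi_{k+1}(x)=\psi_k(x)+a_{k+1}\{f(y^k)+\langle\nabla f(y^k),x-y^k\rangle\}$; $v^{k+1}=\arg\min_{x\in E}\psi_{k+1}(x)$. All minima are assumed attained, and $\nabla f(y^k)\ne0$ for all iterations considered. *)

theory Defs
  imports "HOL-Analysis.Analysis"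
begin

text \<open>The space E is modelled by a type 'a of class euclidean_space (a finite-dimensional
real vector space).  The norm of the paper is an arbitrary norm nrm on 'a (NOT the
built-in Euclidean norm).  The dual space E* is identified with 'a via the inner
product: the functional g acts by x |-> g \<bullet> x.\<close>

definition is_norm :: "('a::real_vector \<Rightarrow> real) \<Rightarrow> bool" where
  "is_norm nrm \<longleftrightarrow> (\<forall>x. 0 \<le> nrm x) \<and> (\<forall>x. nrm x = 0 \<longleftrightarrow> x = 0)
     \<and> (\<forall>x y. nrm (x + y) \<le> nrm x + nrm y) \<and> (\<forall>c x. nrm (c *\<^sub>R x) = \<bar>c\<bar> * nrm x)"

definition dual_norm :: "('a::real_inner \<Rightarrow> real) \<Rightarrow> 'a \<Rightarrow> real" where
  "dual_norm nrm g = Sup ((\<lambda>x. g \<bullet> x) ` {x. nrm x \<le> 1})"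

definition strongly_convex_1 :: "('a::real_vector \<Rightarrow> real) \<Rightarrow> ('a \<Rightarrow> real) \<Rightarrow> bool" where
  "strongly_convex_1 nrm d \<longleftrightarrow> (\<forall>x y t. 0 \<le> t \<and> t \<le> 1 \<longrightarrow>
     d ((1 - t) *\<^sub>R x + t *\<^sub>R y) \<le> (1 - t) * d x + t * d y - t * (1 - t) / 2 * (nrm (x - y))\<^sup>2)"

definition prox_function :: "('a::euclidean_space \<Rightarrow> real) \<Rightarrow> ('a \<Rightarrow> real) \<Rightarrow> ('a \<Rightarrow> 'a) \<Rightarrow> bool" where
  "prox_function nrm d gd \<longleftrightarrow> (\<forall>x. (d has_derivative (\<lambda>h. gd x \<bullet> h)) (at x))
     \<and> continuous_on UNIV gd \<and> convex_on UNIV d \<and> strongly_convex_1 nrm d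
     \<and> (\<forall>x. 0 \<le> d x) \<and> (\<exists>x. d x = 0)"

definition bregman :: "('a::real_inner \<Rightarrow> real) \<Rightarrow> ('a \<Rightarrow> 'a) \<Rightarrow> 'a \<Rightarrow> 'a \<Rightarrow> real" where
  "bregman d gd x z = d x - d z - gd z \<bullet> (x - z)"

text \<open>The set of Hoelder constants for the (sub)gradient selection gf; M_nu is its
infimum (the smallest constant), and M_nu < infinity iff the set is nonempty.\<close>
definition holder_consts :: "('a::real_inner \<Rightarrow> real) \<Rightarrow> ('a \<Rightarrow> 'a) \<Rightarrow> real \<Rightarrow> real set" where
  "holder_consts nrm gf \<nu> = {M. 0 \<le> M \<and> (\<forall>x y. dual_norm nrm (gf x - gf y) \<le> M * nrm (x - y) powr \<nu>)}"

definition holder_M :: "('a::real_inner \<Rightarrow> real) \<Rightarrow> ('a \<Rightarrow> 'a) \<Rightarrow> real \<Rightarrow> real" where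
  "holder_M nrm gf \<nu> = Inf (holder_consts nrm gf \<nu>)"

definition uagm_bound :: "real \<Rightarrow> real \<Rightarrow> real \<Rightarrow> real \<Rightarrow> real" where
  "uagm_bound \<nu> M \<epsilon> \<Theta> =
     2 powr ((2 + 4 * \<nu>) / (1 + 3 * \<nu>))
     * (if \<nu> = 1 then 1 else ((1 - \<nu>) / (1 + \<nu>)) powr ((1 - \<nu>) / (1 + 3 * \<nu>)))
     * (M / \<epsilon>) powr (2 / (1 + 3 * \<nu>))
     * \<Theta> powr ((1 + \<nu>) / (1 + 3 * \<nu>))"

definition uagm_psi :: "('a::real_inner \<Rightarrow> real) \<Rightarrow> ('a \<Rightarrow> 'a) \<Rightarrow> ('a \<Rightarrow> real) \<Rightarrow> ('a \<Rightarrow> 'a)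
    \<Rightarrow> 'a \<Rightarrow> (nat \<Rightarrow> real) \<Rightarrow> (nat \<Rightarrow> 'a) \<Rightarrow> nat \<Rightarrow> 'a \<Rightarrow> real" where
  "uagm_psi d gd f gf x0 a y k z =
     bregman d gd z x0 + (\<Sum>i<k. a (Suc i) * (f (y i) + gf (y i) \<bullet> (z - y i)))"

definition uagm_iterates ::
  "('a::euclidean_space \<Rightarrow> real) \<Rightarrow> ('a \<Rightarrow> real) \<Rightarrow> ('a \<Rightarrow> 'a) \<Rightarrow> ('a \<Rightarrow> 'a) \<Rightarrow> ('a \<Rightarrow> real) \<Rightarrow> ('a \<Rightarrow> 'a)
   \<Rightarrow> real \<Rightarrow> (nat \<Rightarrow> 'a) \<Rightarrow> (nat \<Rightarrow> 'a) \<Rightarrow> (nat \<Rightarrow> 'a) \<Rightarrow> (nat \<Rightarrow> real) \<Rightarrow> (nat \<Rightarrow> real)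
   \<Rightarrow> (nat \<Rightarrow> real) \<Rightarrow> (nat \<Rightarrow> real) \<Rightarrow> bool" where
  "uagm_iterates nrm d gd sharp f gf \<epsilon> x v y \<beta> h a A \<longleftrightarrow>
     A 0 = 0 \<and> v 0 = x 0 \<and>
     (\<forall>k.
        \<comment> \<open>step 1\<close>
        0 \<le> \<beta> k \<and> \<beta> k \<le> 1 \<and>
        (\<forall>b. 0 \<le> b \<and> b \<le> 1 \<longrightarrow> f (v k + \<beta> k *\<^sub>R (x k - v k)) \<le> f (v k + b *\<^sub>R (x k - v k))) \<and>
        y k = v k + \<beta> k *\<^sub>R (x k - v k) \<and>
        gf (y k) \<bullet> (v k - y k) \<ge> 0 \<and>
        \<comment> \<open>step 2\<close>
        0 \<le> h (Suc k) \<and>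
        (\<forall>t. 0 \<le> t \<longrightarrow> f (y k - h (Suc k) *\<^sub>R sharp (gf (y k))) \<le> f (y k - t *\<^sub>R sharp (gf (y k)))) \<and>
        x (Suc k) = y k - h (Suc k) *\<^sub>R sharp (gf (y k)) \<and>
        A k + a (Suc k) \<noteq> 0 \<and>
        f (y k) - (a (Suc k))\<^sup>2 / (2 * (A k + a (Suc k))) * (dual_norm nrm (gf (y k)))\<^sup>2
          + \<epsilon> * a (Suc k) / (2 * (A k + a (Suc k))) = f (x (Suc k)) \<and>
        (\<forall>b. A k + b \<noteq> 0 \<and>
             f (y k) - b\<^sup>2 / (2 * (A k + b)) * (dual_norm nrm (gf (y k)))\<^sup>2
               + \<epsilon> * b / (2 * (A k + b)) = f (x (Suc k)) \<longrightarrow> b \<le> a (Suc k)) \<and>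
        \<comment> \<open>step 3\<close>
        A (Suc k) = A k + a (Suc k) \<and>
        (\<forall>z. uagm_psi d gd f gf (x 0) a y k (v k) \<le> uagm_psi d gd f gf (x 0) a y k z))"

end

theory Submission
  imports Defs
begin

lemma nrm_zero: "is_norm nrm \<Longrightarrow> nrm 0 = 0" unfolding is_norm_def by blast
lemma nrm_nonneg: "is_norm nrm \<Longrightarrow> 0 \<le> nrm x" unfolding is_norm_def by blast
lemma nrm_scale: "is_norm nrm \<Longrightarrow> nrm (c *\<^sub>R x) = \<bar>c\<bar> * nrm x" unfolding is_norm_def by blast
lemma nrm_pos: "is_norm nrm \<Longrightarrow> x \<noteq> 0 \<Longrightarrow> 0 < nrm x" unfolding is_norm_def by (metis order_le_less)
lemma nrm_tri: "is_norm nrm \<Longrightarrow> nrm (x + y) \<le> nrm x + nrm y" unfolding is_norm_def by blast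
lemma nrm_minus: "is_norm nrm \<Longrightarrow> nrm (- x) = nrm x" using nrm_scale[of nrm "-1" x] by simp
lemma nrm_sym: "is_norm nrm \<Longrightarrow> nrm (x - y) = nrm (y - x)" using nrm_minus[of nrm "x - y"] by simp
lemma nrm_normalize: "is_norm nrm \<Longrightarrow> x \<noteq> 0 \<Longrightarrow> nrm (x /\<^sub>R nrm x) = 1"
  using nrm_scale[of nrm "inverse (nrm x)" x] nrm_pos[of nrm x] by simp

lemma norm_convex:
  fixes nrm :: "'a::euclidean_space \<Rightarrow> real"
  assumes "is_norm nrm" shows "convex_on UNIV nrm"
proof (rule convex_onI)
  fix t :: real and x y :: 'a assume t: "t > 0" "t < 1"
  have "nrm ((1 - t) *\<^sub>R x + t *\<^sub>R y) \<le> nrm ((1 - t) *\<^sub>R x) + nrm (t *\<^sub>R y)"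
    using assms unfolding is_norm_def by blast
  also have "\<dots> = (1 - t) * nrm x + t * nrm y"
    using assms t by (simp add: is_norm_def abs_of_pos)
  finally show "nrm ((1 - t) *\<^sub>R x + t *\<^sub>R y) \<le> (1 - t) * nrm x + t * nrm y" .
qed auto

lemma norm_lower:
  fixes nrm :: "'a::euclidean_space \<Rightarrow> real"
  assumes N: "is_norm nrm" shows "\<exists>c>0. \<forall>x. c * norm x \<le> nrm x"
proof -
  have cont: "continuous_on (sphere 0 1) nrm"
    using convex_on_continuous[OF open_UNIV norm_convex[OF N]] continuous_on_subset by blast
  obtain b :: 'a where b: "b \<in> Basis" using nonempty_Basis by blast
  have ne: "sphere (0::'a) 1 \<noteq> {}" using b by (auto intro!: exI[of _ b])
  obtain x0 where x0: "x0 \<in> sphere 0 1" "\<forall>y\<in>sphere 0 1. nrm x0 \<le> nrm y"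
    using continuous_attains_inf[OF compact_sphere ne cont] by blast
  have "x0 \<noteq> 0" using x0 by auto
  then have pos: "nrm x0 > 0" using N unfolding is_norm_def by (metis order_le_less)
  have "nrm x0 * norm x \<le> nrm x" for x
  proof (cases "x = 0")
    case True then show ?thesis using N by (simp add: is_norm_def)
  next
    case False
    have "nrm x0 \<le> nrm (x /\<^sub>R norm x)" using x0 False by simp
    also have "\<dots> = nrm x / norm x" using N False by (simp add: is_norm_def divide_inverse_commute)
    finally show ?thesis using False by (simp add: field_simps)
  qed
  then show ?thesis using pos by blast
qed

lemma dual_bdd:
  fixes nrm :: "'a::euclidean_space \<Rightarrow> real"
  assumes N: "is_norm nrm" shows "bdd_above ((\<lambda>x. g \<bullet> x) ` {x. nrm x \<le> 1})"
proof -
  obtain c where c: "c > 0" "\<forall>x. c * norm x \<le> nrm x" using norm_lower[OF N] by blast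
  have "g \<bullet> x \<le> norm g / c" if "nrm x \<le> 1" for x
  proof -
    have "g \<bullet> x \<le> norm g * norm x" by (rule Cauchy_Schwarz_ineq2[THEN order_trans[OF abs_ge_self]])
    also have "norm x \<le> 1 / c" using c that by (smt (verit) mult.commute pos_le_divide_eq)
    then have "norm g * norm x \<le> norm g * (1/c)" using mult_left_mono norm_ge_zero by blast
    finally show ?thesis by simp
  qed
  then show ?thesis by (auto simp: bdd_above_def)
qed

lemma dual_ineq:
  fixes nrm :: "'a::euclidean_space \<Rightarrow> real"
  assumes N: "is_norm nrm" shows "g \<bullet> u \<le> dual_norm nrm g * nrm u"
proof (cases "u = 0")
  case True
  have "0 \<le> dual_norm nrm g" unfolding dual_norm_def
    using N by (intro cSup_upper2[OF _ _ dual_bdd[OF N], of "g \<bullet> 0"]) (auto simp: nrm_zero image_iff intro!: exI[of _ 0])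
  then show ?thesis using True N by (simp add: is_norm_def)
next
  case False
  then have p: "nrm u > 0" using N unfolding is_norm_def by (metis order_le_less)
  have "nrm (u /\<^sub>R nrm u) \<le> 1" using nrm_normalize[OF N False] by simp
  then have "g \<bullet> (u /\<^sub>R nrm u) \<le> dual_norm nrm g" unfolding dual_norm_def
    by (intro cSup_upper dual_bdd[OF N]) (rule imageI, simp)
  then show ?thesis using p by (simp add: field_simps)
qed

lemma dual_nonneg:
  fixes nrm :: "'a::euclidean_space \<Rightarrow> real"
  assumes N: "is_norm nrm" shows "0 \<le> dual_norm nrm g"
  unfolding dual_norm_def
  using N by (intro cSup_upper2[OF _ _ dual_bdd[OF N], of "g \<bullet> 0"]) (auto simp: nrm_zero image_iff intro!: exI[of _ 0])

lemma dual_pos: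
  fixes nrm :: "'a::euclidean_space \<Rightarrow> real"
  assumes N: "is_norm nrm" and g: "g \<noteq> 0" shows "0 < dual_norm nrm g"
proof -
  have p: "nrm g > 0" using N g unfolding is_norm_def by (metis order_le_less)
  have "g \<bullet> g \<le> dual_norm nrm g * nrm g" by (rule dual_ineq[OF N])
  moreover have "g \<bullet> g > 0" using g by simp
  ultimately show ?thesis using p by (smt (verit) mult_nonpos_nonneg)
qed

lemma dual_abs:
  fixes nrm :: "'a::euclidean_space \<Rightarrow> real"
  assumes N: "is_norm nrm" shows "\<bar>g \<bullet> u\<bar> \<le> dual_norm nrm g * nrm u"
proof -
  have "g \<bullet> (-u) \<le> dual_norm nrm g * nrm (-u)" by (rule dual_ineq[OF N])
  moreover have "nrm (-u) = nrm u" using N unfolding is_norm_def by (metis abs_minus_cancel abs_one mult_1 scaleR_minus1_left)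
  ultimately show ?thesis using dual_ineq[OF N, of g u] by (simp add: inner_minus_right)
qed

lemma real_aux:
  fixes D n :: real
  assumes h: "\<And>t. 0 < t \<Longrightarrow> t < 1 \<Longrightarrow> (1 - t) / 2 * n \<le> D" and n0: "0 \<le> n"
  shows "n / 2 \<le> D"
proof (rule ccontr)
  assume c: "\<not> n / 2 \<le> D"
  have D0: "n / 4 \<le> D" using h[of "1/2"] by simp
  then have n: "n > 0" using c n0 by linarith
  define t where "t = (n / 2 - D) / n"
  have t0: "0 < t" using c n unfolding t_def by simp
  have t1: "t < 1" using n D0 n0 unfolding t_def by (simp add: field_simps)
  have "(1 - t) / 2 * n = n / 4 + D / 2" using n unfolding t_def by (simp add: field_simps)
  with h[OF t0 t1] c show False by linarith
qed

lemma strong_min: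
  fixes d :: "'a::euclidean_space \<Rightarrow> real"
  assumes sc: "strongly_convex_1 nrm d"
    and min: "\<forall>z. d v + K + w \<bullet> v \<le> d z + K + w \<bullet> z"
  shows "d v + K + w \<bullet> v + (nrm (v - z))\<^sup>2 / 2 \<le> d z + K + w \<bullet> z"
proof -
  let ?p = "\<lambda>z. d z + K + w \<bullet> z"
  let ?n = "(nrm (v - z))\<^sup>2"
  have key: "?p v \<le> ?p z - (1 - t) / 2 * ?n" if t: "0 < t" "t < 1" for t
  proof -
    have "d ((1 - t) *\<^sub>R v + t *\<^sub>R z) \<le> (1 - t) * d v + t * d z - t * (1 - t) / 2 * ?n"
      using sc t unfolding strongly_convex_1_def by auto
    moreover have "w \<bullet> ((1 - t) *\<^sub>R v + t *\<^sub>R z) = (1 - t) * (w \<bullet> v) + t * (w \<bullet> z)"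
      by (simp add: inner_add_right)
    moreover have "?p v \<le> ?p ((1 - t) *\<^sub>R v + t *\<^sub>R z)" using min by blast
    moreover have "(1-t) * d v = d v - t * d v" "(1-t) * (w \<bullet> v) = w \<bullet> v - t * (w \<bullet> v)"
      by (simp_all add: left_diff_distrib)
    ultimately have "t * d v + t * (w \<bullet> v) \<le> t * d z + t * (w \<bullet> z) - t * (1 - t) / 2 * ?n"
      by linarith
    moreover have "t * (?p v - (?p z - (1 - t) / 2 * ?n)) = t * d v + t * (w \<bullet> v) - (t * d z + t * (w \<bullet> z) - t * (1 - t) / 2 * ?n)"
      by (simp add: field_simps)
    ultimately have "t * (?p v - (?p z - (1 - t) / 2 * ?n)) \<le> 0" by linarith
    then show ?thesis using t by (simp add: mult_le_0_iff)
  qed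
  have "?p z - ?p v \<ge> ?n / 2"
  proof (rule real_aux)
    fix t :: real assume "0 < t" "t < 1"
    from key[OF this] show "(1 - t) / 2 * ?n \<le> ?p z - ?p v" by linarith
  qed simp
  then show ?thesis by simp
qed

lemma psi_affine:
  "uagm_psi d gd f gf x0 a y k z = d z + (- d x0 + gd x0 \<bullet> x0 + (\<Sum>i<k. a (Suc i) * (f (y i) - gf (y i) \<bullet> y i)))
      + (- gd x0 + (\<Sum>i<k. a (Suc i) *\<^sub>R gf (y i))) \<bullet> z"
proof -
  have "(\<Sum>i<k. a (Suc i) * (f (y i) + gf (y i) \<bullet> (z - y i)))
     = (\<Sum>i<k. a (Suc i) * (f (y i) - gf (y i) \<bullet> y i)) + (\<Sum>i<k. a (Suc i) *\<^sub>R gf (y i)) \<bullet> z"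
    unfolding inner_sum_left sum.distrib[symmetric]
    by (rule sum.cong) (simp_all add: inner_diff_right right_diff_distrib distrib_left)
  then show ?thesis unfolding uagm_psi_def bregman_def by (simp add: inner_diff_right inner_add_left inner_diff_left)
qed

lemma step_alg:
  fixes A a r n P' Pk' Pk fx fy fx' \<epsilon> gvy :: real
  assumes A: "A \<ge> 0" and a: "a > 0" and P': "P' = Pk' + a * (fy + gvy)"
    and Pk': "Pk + n\<^sup>2 / 2 \<le> Pk'" and gvy: "- (r * n) \<le> gvy"
    and IH: "A * fx - A * \<epsilon> / 2 \<le> Pk" and fyx: "fy \<le> fx"
    and eq: "fy - a\<^sup>2 / (2 * (A + a)) * r\<^sup>2 + \<epsilon> * a / (2 * (A + a)) = fx'"
  shows "(A + a) * fx' - (A + a) * \<epsilon> / 2 \<le> P'"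
proof -
  have Aa: "A + a > 0" using A a by simp
  have e1: "(A + a) * fx' = (A + a) * fy - a\<^sup>2 * r\<^sup>2 / 2 + \<epsilon> * a / 2"
  proof -
    have x1: "(A + a) * (a\<^sup>2 / (2 * (A + a)) * r\<^sup>2) = a\<^sup>2 * r\<^sup>2 / 2" using Aa by (simp add: field_simps)
    have x2: "(A + a) * (\<epsilon> * a / (2 * (A + a))) = \<epsilon> * a / 2" using Aa by (simp add: field_simps)
    have "(A + a) * fx' = (A + a) * fy - (A + a) * (a\<^sup>2 / (2 * (A + a)) * r\<^sup>2) + (A + a) * (\<epsilon> * a / (2 * (A + a)))"
      using eq[symmetric] by (simp add: right_diff_distrib distrib_left)
    then show ?thesis using x1 x2 by linarith
  qed
  have "0 \<le> (n - a * r)\<^sup>2" by simp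
  then have e2: "- (a\<^sup>2 * r\<^sup>2 / 2) \<le> n\<^sup>2 / 2 - a * (r * n)" by (simp add: power2_eq_square algebra_simps)
  have e3: "A * fy \<le> A * fx" using A fyx by (simp add: mult_left_mono)
  have e4: "a * (- (r * n)) \<le> a * gvy" by (rule mult_left_mono) (use a gvy in auto)
  have e5: "P' = Pk' + a * fy + a * gvy" using P' by (simp add: distrib_left)
  have e6: "(A + a) * fy = A * fy + a * fy" "(A + a) * \<epsilon> / 2 = A * \<epsilon> / 2 + \<epsilon> * a / 2"
    by (simp_all add: algebra_simps)
  show ?thesis using e1 e2 e3 e4 e5 e6 IH Pk' by linarith
qed

lemma a_pos_alg:
  fixes A a c G \<epsilon> fy fx' :: real
  assumes A: "A \<ge> 0" and eps: "\<epsilon> > 0" and c: "c = fy - fx'" "c \<ge> 0" and G: "G > 0"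
    and largest: "\<forall>b. A + b \<noteq> 0 \<and> fy - b\<^sup>2 / (2 * (A + b)) * G + \<epsilon> * b / (2 * (A + b)) = fx' \<longrightarrow> b \<le> a"
  shows "a > 0"
proof -
  define p where "p = \<epsilon> + 2 * c"
  define s where "s = sqrt (p\<^sup>2 + 8 * A * c * G)"
  define b where "b = (p + s) / (2 * G)"
  have p: "p > 0" using eps c unfolding p_def by simp
  have "0 \<le> 8 * A * c * G" using A c(2) G by (intro mult_nonneg_nonneg) auto
  then have nn: "0 \<le> p\<^sup>2 + 8 * A * c * G" using zero_le_power2[of p] by linarith
  then have s2: "s\<^sup>2 = p\<^sup>2 + 8 * A * c * G" unfolding s_def by simp
  have s0: "s \<ge> 0" unfolding s_def using nn by simp
  have b0: "b > 0" unfolding b_def using p s0 G by simp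
  have hb: "2 * G * b = p + s" unfolding b_def using G by simp
  have "4 * G * (G * b\<^sup>2 - p * b) = (2 * G * b)\<^sup>2 - 2 * p * (2 * G * b)" by (simp add: power2_eq_square algebra_simps)
  also have "\<dots> = 4 * G * (2 * A * c)" unfolding hb using s2 by (simp add: power2_eq_square algebra_simps)
  finally have q: "G * b\<^sup>2 - p * b = 2 * A * c" using G by simp
  have Ab: "A + b > 0" using A b0 by simp
  have "fy - b\<^sup>2 / (2 * (A + b)) * G + \<epsilon> * b / (2 * (A + b)) = fx'"
  proof -
    have "b\<^sup>2 * G - \<epsilon> * b = 2 * (A + b) * c" using q unfolding p_def by (simp add: algebra_simps)
    have "b\<^sup>2 / (2 * (A + b)) * G - \<epsilon> * b / (2 * (A + b)) = (b\<^sup>2 * G - \<epsilon> * b) / (2 * (A + b))"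
      by (simp add: diff_divide_distrib)
    also have "\<dots> = (2 * (A + b) * c) / (2 * (A + b))" using \<open>b\<^sup>2 * G - \<epsilon> * b = 2 * (A + b) * c\<close> by simp
    also have "\<dots> = c" using Ab by simp
    finally have "b\<^sup>2 / (2 * (A + b)) * G - \<epsilon> * b / (2 * (A + b)) = c" .
    then show ?thesis using c by simp
  qed
  then have "b \<le> a" using largest Ab by auto
  then show ?thesis using b0 by simp
qed

lemma deriv_sandwich:
  fixes \<phi> \<sigma> :: "real \<Rightarrow> real"
  assumes sub: "\<And>s w. \<phi> w \<ge> \<phi> s + \<sigma> s * (w - s)" and cont: "isCont \<sigma> t"
  shows "(\<phi> has_real_derivative \<sigma> t) (at t)"
  unfolding has_field_derivative_iff
proof (rule tendsto_sandwich[where f="\<lambda>s. min (\<sigma> t) (\<sigma> s)" and h="\<lambda>s. max (\<sigma> t) (\<sigma> s)"])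
  have "\<sigma> \<midarrow>t\<rightarrow> \<sigma> t" using cont by (simp add: isCont_def)
  then show "((\<lambda>s. min (\<sigma> t) (\<sigma> s)) \<longlongrightarrow> \<sigma> t) (at t)" "((\<lambda>s. max (\<sigma> t) (\<sigma> s)) \<longlongrightarrow> \<sigma> t) (at t)"
    using tendsto_min[of "\<lambda>_. \<sigma> t" "\<sigma> t" "at t" \<sigma> "\<sigma> t"] tendsto_max[of "\<lambda>_. \<sigma> t" "\<sigma> t" "at t" \<sigma> "\<sigma> t"]
    by auto
  have b: "min (\<sigma> t) (\<sigma> s) \<le> (\<phi> s - \<phi> t) / (s - t) \<and> (\<phi> s - \<phi> t) / (s - t) \<le> max (\<sigma> t) (\<sigma> s)"
    if "s \<noteq> t" for s
  proof (cases "s > t")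
    case True
    have "\<sigma> t * (s - t) \<le> \<phi> s - \<phi> t" using sub[of t s] by simp
    then have 1: "\<sigma> t \<le> (\<phi> s - \<phi> t) / (s - t)" using True by (simp add: pos_le_divide_eq)
    have "\<phi> s - \<phi> t \<le> \<sigma> s * (s - t)" using sub[of s t] by (simp add: algebra_simps)
    then have 2: "(\<phi> s - \<phi> t) / (s - t) \<le> \<sigma> s" using True by (simp add: pos_divide_le_eq)
    show ?thesis using 1 2 by linarith
  next
    case False
    then have st: "s - t < 0" using that by simp
    have "\<sigma> t * (s - t) \<le> \<phi> s - \<phi> t" using sub[of t s] by simp
    then have 1: "(\<phi> s - \<phi> t) / (s - t) \<le> \<sigma> t" using st by (simp add: neg_divide_le_eq)
    have "\<phi> s - \<phi> t \<le> \<sigma> s * (s - t)" using sub[of s t] by (simp add: algebra_simps)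
    then have 2: "\<sigma> s \<le> (\<phi> s - \<phi> t) / (s - t)" using st by (simp add: neg_le_divide_eq)
    show ?thesis using 1 2 by linarith
  qed
  show "\<forall>\<^sub>F s in at t. min (\<sigma> t) (\<sigma> s) \<le> (\<phi> s - \<phi> t) / (s - t)"
    using b by (auto simp: eventually_at_filter)
  show "\<forall>\<^sub>F s in at t. (\<phi> s - \<phi> t) / (s - t) \<le> max (\<sigma> t) (\<sigma> s)"
    using b by (auto simp: eventually_at_filter)
qed

lemma holder_M_prop:
  fixes nrm :: "'a::euclidean_space \<Rightarrow> real"
  assumes ne: "holder_consts nrm gf \<nu> \<noteq> {}"
  shows "0 \<le> holder_M nrm gf \<nu> \<and> (\<forall>p q. dual_norm nrm (gf p - gf q) \<le> holder_M nrm gf \<nu> * nrm (p - q) powr \<nu>)"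
proof -
  let ?S = "holder_consts nrm gf \<nu>"
  have M0: "0 \<le> holder_M nrm gf \<nu>" unfolding holder_M_def
    by (rule cInf_greatest[OF ne]) (auto simp: holder_consts_def)
  have "dual_norm nrm (gf p - gf q) \<le> holder_M nrm gf \<nu> * nrm (p - q) powr \<nu>" for p q
  proof (cases "nrm (p - q) powr \<nu> = 0")
    case True
    obtain M where "M \<in> ?S" using ne by blast
    then have "dual_norm nrm (gf p - gf q) \<le> M * nrm (p - q) powr \<nu>" by (auto simp: holder_consts_def)
    then show ?thesis using True by simp
  next
    case False
    then have R: "nrm (p - q) powr \<nu> > 0" by (simp add: order_le_less)
    have "dual_norm nrm (gf p - gf q) / nrm (p - q) powr \<nu> \<le> holder_M nrm gf \<nu>" unfolding holder_M_def
    proof (rule cInf_greatest[OF ne])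
      fix M assume "M \<in> ?S"
      then have "dual_norm nrm (gf p - gf q) \<le> M * nrm (p - q) powr \<nu>" by (auto simp: holder_consts_def)
      then show "dual_norm nrm (gf p - gf q) / nrm (p - q) powr \<nu> \<le> M" using R by (simp add: pos_divide_le_eq)
    qed
    then show ?thesis using R by (simp add: pos_divide_le_eq)
  qed
  then show ?thesis using M0 by blast
qed

lemma young_nu:
  fixes M \<nu> \<delta> t :: real
  assumes nu: "0 \<le> \<nu>" "\<nu> < 1" and M: "M > 0" and dl: "\<delta> > 0" and t: "t \<ge> 0"
  shows "M / (1 + \<nu>) * t powr (1 + \<nu>)
     \<le> exp ((ln M + (1 - (1 + \<nu>) / 2) * (ln (1 - (1 + \<nu>) / 2) - ln ((1 + \<nu>) / 2) - ln \<delta>)) / ((1 + \<nu>) / 2)) / 2 * t\<^sup>2 + \<delta> / 2"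
proof (cases "t = 0")
  case True then show ?thesis using dl by simp
next
  case False
  then have t0: "t > 0" using t by simp
  define p where "p = (1 + \<nu>) / 2"
  define lL where "lL = (ln M + (1 - p) * (ln (1 - p) - ln p - ln \<delta>)) / p"
  have p: "0 < p" "p < 1" using nu unfolding p_def by auto
  define X where "X = exp lL * t\<^sup>2 / p"
  define Y where "Y = \<delta> / (1 - p)"
  have X: "X > 0" unfolding X_def using t0 p by simp
  have Y: "Y > 0" unfolding Y_def using dl p by simp
  have yg: "X powr p * Y powr (1 - p) \<le> p * X + (1 - p) * Y"
    by (rule Youngs_inequality_0) (use p X Y in auto)
  have rhs: "p * X + (1 - p) * Y = exp lL * t\<^sup>2 + \<delta>" unfolding X_def Y_def using p by simp
  have lX: "ln X = lL + 2 * ln t - ln p" unfolding X_def using t0 p by (simp add: ln_mult ln_div ln_realpow)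
  have lY: "ln Y = ln \<delta> - ln (1 - p)" unfolding Y_def using dl p by (simp add: ln_div)
  have "X powr p * Y powr (1 - p) = exp (p * ln X + (1 - p) * ln Y)"
    using X Y by (simp add: powr_def exp_add)
  also have "p * ln X + (1 - p) * ln Y = ln M - ln p + (1 + \<nu>) * ln t"
  proof -
    have e: "p * lL = ln M + (1 - p) * (ln (1 - p) - ln p - ln \<delta>)" unfolding lL_def using p by simp
    have "p * ln X + (1 - p) * ln Y = p * lL + 2 * p * ln t - p * ln p + (1 - p) * ln \<delta> - (1 - p) * ln (1 - p)"
      unfolding lX lY by (simp add: algebra_simps)
    also have "\<dots> = ln M - ln p + 2 * p * ln t" unfolding e by (simp add: algebra_simps)
    also have "2 * p = 1 + \<nu>" unfolding p_def by simp
    finally show ?thesis .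
  qed
  also have "exp (ln M - ln p + (1 + \<nu>) * ln t) = M / p * t powr (1 + \<nu>)"
    using M p t0 by (simp add: exp_diff exp_add powr_def mult.commute)
  finally have "M / p * t powr (1 + \<nu>) \<le> exp lL * t\<^sup>2 + \<delta>" using yg rhs by simp
  then have F: "(M / p * t powr (1 + \<nu>)) / 2 \<le> (exp lL * t\<^sup>2 + \<delta>) / 2" by (rule divide_right_mono) simp
  have e1: "M / (1 + \<nu>) * t powr (1 + \<nu>) = (M / p * t powr (1 + \<nu>)) / 2" unfolding p_def using nu by (simp add: field_simps)
  have e2: "(exp lL * t\<^sup>2 + \<delta>) / 2 = exp lL / 2 * t\<^sup>2 + \<delta> / 2" by (simp add: add_divide_distrib)
  have "M / (1 + \<nu>) * t powr (1 + \<nu>) \<le> exp lL / 2 * t\<^sup>2 + \<delta> / 2" using F unfolding e1[symmetric] e2 .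
  then show ?thesis unfolding lL_def p_def .
qed

lemma sum_lin:
  fixes P :: "nat \<Rightarrow> real"
  assumes "\<And>k. P k + K \<le> P (Suc k)" "P 0 = 0"
  shows "real N * K \<le> P N"
proof (induction N)
  case 0 then show ?case using assms by simp
next
  case (Suc N)
  have "real (Suc N) * K = real N * K + K" by (simp add: distrib_right)
  then show ?case using Suc assms(1)[of N] by linarith
qed

lemma bregman_lower:
  fixes d :: "'a::euclidean_space \<Rightarrow> real"
  assumes prox: "prox_function nrm d gd" and N: "is_norm nrm"
  shows "(nrm (x - z))\<^sup>2 / 2 \<le> bregman d gd x z"
proof -
  define w where "w = x - z"
  define n where "n = (nrm (z - x))\<^sup>2"
  define \<phi> where "\<phi> t = d (z + t *\<^sub>R w)" for t
  have dd: "(d has_derivative (\<lambda>h. gd z \<bullet> h)) (at (z + 0 *\<^sub>R w))" using prox unfolding prox_function_def by simp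
  have ld: "((\<lambda>s. z + s *\<^sub>R w) has_derivative (\<lambda>h. h *\<^sub>R w)) (at 0)"
    by (auto intro!: derivative_eq_intros)
  have "(\<phi> has_derivative (\<lambda>h. gd z \<bullet> (h *\<^sub>R w))) (at 0)"
    using has_derivative_compose[OF ld dd] unfolding \<phi>_def by (simp add: o_def)
  moreover have "(\<lambda>h. gd z \<bullet> (h *\<^sub>R w)) = (*) (gd z \<bullet> w)" by (rule ext) simp
  ultimately have "(\<phi> has_real_derivative (gd z \<bullet> w)) (at 0)" unfolding has_field_derivative_def by simp
  then have "((\<lambda>t. (\<phi> t - \<phi> 0) / (t - 0)) \<longlongrightarrow> gd z \<bullet> w) (at 0)"
    unfolding has_field_derivative_iff .
  then have "((\<lambda>t. (\<phi> t - \<phi> 0) / t) \<longlongrightarrow> gd z \<bullet> w) (at 0)" by simp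
  then have lim1: "((\<lambda>t. (\<phi> t - \<phi> 0) / t) \<longlongrightarrow> gd z \<bullet> w) (at_right 0)"
    by (rule tendsto_mono[OF at_within_le_at])
  have lim2: "((\<lambda>t. d x - d z - (1 - t) / 2 * n) \<longlongrightarrow> d x - d z - (1 - 0) / 2 * n) (at_right 0)"
    by (intro tendsto_intros) simp
  have ev: "\<forall>\<^sub>F t in at_right 0. (\<phi> t - \<phi> 0) / t \<le> d x - d z - (1 - t) / 2 * n"
  proof -
    have "(\<phi> t - \<phi> 0) / t \<le> d x - d z - (1 - t) / 2 * n" if t: "0 < t" "t < 1" for t
    proof -
      have "z + t *\<^sub>R w = (1 - t) *\<^sub>R z + t *\<^sub>R x" unfolding w_def by (simp add: algebra_simps)
      then have "\<phi> t \<le> (1 - t) * d z + t * d x - t * (1 - t) / 2 * n"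
        using prox t unfolding prox_function_def strongly_convex_1_def \<phi>_def n_def by auto
      then have "\<phi> t - \<phi> 0 \<le> t * (d x - d z - (1 - t) / 2 * n)" unfolding \<phi>_def by (simp add: algebra_simps)
      then show ?thesis using t by (simp add: pos_divide_le_eq mult.commute)
    qed
    then show ?thesis unfolding eventually_at_right_field
      by (intro exI[of _ 1]) auto
  qed
  have "gd z \<bullet> w \<le> d x - d z - (1 - 0) / 2 * n"
    by (rule tendsto_le[OF trivial_limit_at_right_real lim2 lim1 ev])
  moreover have "nrm (z - x) = nrm (x - z)" by (rule nrm_sym[OF N])
  ultimately show ?thesis unfolding bregman_def n_def w_def by simp
qed

lemma log_identity:
  fixes \<nu> l2 lR lM le lT :: real
  assumes "0 \<le> \<nu>"
  shows "(2 + 4 * \<nu>) / (1 + 3 * \<nu>) * l2 + (1 - \<nu>) / (1 + 3 * \<nu>) * lR + 2 / (1 + 3 * \<nu>) * (lM - le)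
    + (1 + \<nu>) / (1 + 3 * \<nu>) * lT + (- 2 * lM - (1 - \<nu>) * lR + (1 - \<nu>) * le) / (1 + 3 * \<nu>)
    - (1 + \<nu>) / (1 + 3 * \<nu>) * (l2 + lT - le) = l2"
proof -
  have d: "1 + 3 * \<nu> \<noteq> 0" using assms by simp
  have num: "(2 + 4 * \<nu>) * l2 + (1 - \<nu>) * lR + 2 * (lM - le) + (1 + \<nu>) * lT + (- 2 * lM - (1 - \<nu>) * lR + (1 - \<nu>) * le)
    - (1 + \<nu>) * (l2 + lT - le) = l2 * (1 + 3 * \<nu>)" by (simp add: algebra_simps)
  have "(2 + 4 * \<nu>) / (1 + 3 * \<nu>) * l2 + (1 - \<nu>) / (1 + 3 * \<nu>) * lR + 2 / (1 + 3 * \<nu>) * (lM - le)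
    + (1 + \<nu>) / (1 + 3 * \<nu>) * lT + (- 2 * lM - (1 - \<nu>) * lR + (1 - \<nu>) * le) / (1 + 3 * \<nu>)
    - (1 + \<nu>) / (1 + 3 * \<nu>) * (l2 + lT - le) = ((2 + 4 * \<nu>) * l2 + (1 - \<nu>) * lR + 2 * (lM - le) + (1 + \<nu>) * lT + (- 2 * lM - (1 - \<nu>) * lR + (1 - \<nu>) * le)
    - (1 + \<nu>) * (l2 + lT - le)) / (1 + 3 * \<nu>)"
    by (simp only: times_divide_eq_left add_divide_distrib[symmetric] diff_divide_distrib[symmetric])
  also have "\<dots> = l2" unfolding num using d by simp
  finally show ?thesis .
qed

locale uagm =
  fixes nrm :: "'a::euclidean_space \<Rightarrow> real"
    and d :: "'a \<Rightarrow> real" and gd :: "'a \<Rightarrow> 'a"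
    and sharp :: "'a \<Rightarrow> 'a"
    and f :: "'a \<Rightarrow> real" and gf :: "'a \<Rightarrow> 'a"
    and xs :: 'a and \<epsilon> \<Theta> :: real
    and x v y :: "nat \<Rightarrow> 'a" and \<beta> h a A :: "nat \<Rightarrow> real"
  assumes norm: "is_norm nrm"
    and prox: "prox_function nrm d gd"
    and sharp: "\<forall>g. nrm (sharp g) \<le> 1 \<and> g \<bullet> sharp g = dual_norm nrm g"
    and fclass: "(convex_on UNIV f \<and> (\<forall>p z. f z \<ge> f p + gf p \<bullet> (z - p)))
              \<or> ((\<forall>p. (f has_derivative (\<lambda>u. gf p \<bullet> u)) (at p)) \<and> continuous_on UNIV gf
                 \<and> (\<forall>p. f p - f xs \<le> gf p \<bullet> (p - xs)))"
    and xs_min: "\<forall>z. f xs \<le> f z"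
    and eps: "\<epsilon> > 0"
    and Theta: "\<Theta> \<ge> bregman d gd xs (x 0)"
    and iter: "uagm_iterates nrm d gd sharp f gf \<epsilon> x v y \<beta> h a A"
    and nonzero: "\<forall>k. gf (y k) \<noteq> 0"
begin

lemma wqc: "f p - f xs \<le> gf p \<bullet> (p - xs)"
  using fclass
proof
  assume "convex_on UNIV f \<and> (\<forall>p z. f z \<ge> f p + gf p \<bullet> (z - p))"
  then have "f xs \<ge> f p + gf p \<bullet> (xs - p)" by blast
  then show ?thesis by (simp add: inner_diff_right)
next
  assume "(\<forall>p. (f has_derivative (\<lambda>u. gf p \<bullet> u)) (at p)) \<and> continuous_on UNIV gf
                 \<and> (\<forall>p. f p - f xs \<le> gf p \<bullet> (p - xs))"
  then show ?thesis by blast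
qed

lemma A0: "A 0 = 0" and v0: "v 0 = x 0"
  using iter unfolding uagm_iterates_def by auto

lemma itk: "0 \<le> \<beta> k \<and> \<beta> k \<le> 1 \<and>
        (\<forall>b. 0 \<le> b \<and> b \<le> 1 \<longrightarrow> f (v k + \<beta> k *\<^sub>R (x k - v k)) \<le> f (v k + b *\<^sub>R (x k - v k))) \<and>
        y k = v k + \<beta> k *\<^sub>R (x k - v k) \<and>
        gf (y k) \<bullet> (v k - y k) \<ge> 0 \<and>
        0 \<le> h (Suc k) \<and>
        (\<forall>t. 0 \<le> t \<longrightarrow> f (y k - h (Suc k) *\<^sub>R sharp (gf (y k))) \<le> f (y k - t *\<^sub>R sharp (gf (y k)))) \<and>
        x (Suc k) = y k - h (Suc k) *\<^sub>R sharp (gf (y k)) \<and>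
        A k + a (Suc k) \<noteq> 0 \<and>
        f (y k) - (a (Suc k))\<^sup>2 / (2 * (A k + a (Suc k))) * (dual_norm nrm (gf (y k)))\<^sup>2
          + \<epsilon> * a (Suc k) / (2 * (A k + a (Suc k))) = f (x (Suc k)) \<and>
        (\<forall>b. A k + b \<noteq> 0 \<and>
             f (y k) - b\<^sup>2 / (2 * (A k + b)) * (dual_norm nrm (gf (y k)))\<^sup>2
               + \<epsilon> * b / (2 * (A k + b)) = f (x (Suc k)) \<longrightarrow> b \<le> a (Suc k)) \<and>
        A (Suc k) = A k + a (Suc k) \<and>
        (\<forall>z. uagm_psi d gd f gf (x 0) a y k (v k) \<le> uagm_psi d gd f gf (x 0) a y k z)"
  using iter unfolding uagm_iterates_def by (elim conjE) (erule spec)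

lemma largest: "\<forall>b. A k + b \<noteq> 0 \<and>
             f (y k) - b\<^sup>2 / (2 * (A k + b)) * (dual_norm nrm (gf (y k)))\<^sup>2
               + \<epsilon> * b / (2 * (A k + b)) = f (x (Suc k)) \<longrightarrow> b \<le> a (Suc k)"
  using itk[of k] by (elim conjE) assumption
lemma eqk: "f (y k) - (a (Suc k))\<^sup>2 / (2 * (A k + a (Suc k))) * (dual_norm nrm (gf (y k)))\<^sup>2
          + \<epsilon> * a (Suc k) / (2 * (A k + a (Suc k))) = f (x (Suc k))"
  using itk[of k] by (elim conjE) assumption
lemma Asuc: "A (Suc k) = A k + a (Suc k)"
  using itk[of k] by (elim conjE) assumption
lemma vmin: "\<forall>z. uagm_psi d gd f gf (x 0) a y k (v k) \<le> uagm_psi d gd f gf (x 0) a y k z"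
  using itk[of k] by (elim conjE) assumption
lemma gvy0: "gf (y k) \<bullet> (v k - y k) \<ge> 0"
  using itk[of k] by (elim conjE) assumption

lemma bmin: "\<forall>b. 0 \<le> b \<and> b \<le> 1 \<longrightarrow> f (v k + \<beta> k *\<^sub>R (x k - v k)) \<le> f (v k + b *\<^sub>R (x k - v k))"
  using itk[of k] by (elim conjE) assumption
lemma ydef: "y k = v k + \<beta> k *\<^sub>R (x k - v k)"
  using itk[of k] by (elim conjE) assumption
lemma tmin: "\<forall>t. 0 \<le> t \<longrightarrow> f (y k - h (Suc k) *\<^sub>R sharp (gf (y k))) \<le> f (y k - t *\<^sub>R sharp (gf (y k)))"
  using itk[of k] by (elim conjE) assumption
lemma xdef: "x (Suc k) = y k - h (Suc k) *\<^sub>R sharp (gf (y k))"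
  using itk[of k] by (elim conjE) assumption
lemma h0: "0 \<le> h (Suc k)"
  using itk[of k] by (elim conjE) assumption

lemma fy_le_fx: "f (y k) \<le> f (x k)"
proof -
  have "f (v k + \<beta> k *\<^sub>R (x k - v k)) \<le> f (v k + 1 *\<^sub>R (x k - v k))" using bmin[of k, rule_format, of 1] by simp
  then show ?thesis using ydef[of k] by simp
qed

lemma fx_le_fy: "f (x (Suc k)) \<le> f (y k)"
proof -
  have "f (y k - h (Suc k) *\<^sub>R sharp (gf (y k))) \<le> f (y k - 0 *\<^sub>R sharp (gf (y k)))" using tmin[of k, rule_format, of 0] by simp
  then show ?thesis using xdef[of k] by simp
qed

lemma G_pos: "dual_norm nrm (gf (y k)) > 0"
  using dual_pos[OF norm] nonzero by blast

lemma Apos: "A k \<ge> 0 \<and> a (Suc k) > 0"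
proof (induction k)
  case 0
  have "a (Suc 0) > 0"
    by (rule a_pos_alg[OF _ eps refl _ _ largest[of 0]]) (use A0 fx_le_fy[of 0] G_pos[of 0] in auto)
  then show ?case using A0 by simp
next
  case (Suc k)
  have A: "A (Suc k) \<ge> 0" using Suc Asuc[of k] by simp
  have "a (Suc (Suc k)) > 0"
    by (rule a_pos_alg[OF A eps refl _ _ largest[of "Suc k"]]) (use fx_le_fy[of "Suc k"] G_pos[of "Suc k"] in auto)
  then show ?case using A by simp
qed

lemma A_sum: "A k = (\<Sum>i<k. a (Suc i))"
  by (induction k) (simp_all add: A0 Asuc)

lemma invariant: "A k * f (x k) - A k * \<epsilon> / 2 \<le> uagm_psi d gd f gf (x 0) a y k (v k)"
proof (induction k)
  case 0
  then show ?case using A0 v0 by (simp add: uagm_psi_def bregman_def)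
next
  case (Suc k)
  let ?psi = "uagm_psi d gd f gf (x 0) a y"
  let ?g = "gf (y k)"
  have sc: "strongly_convex_1 nrm d" using prox unfolding prox_function_def by blast
  have P': "?psi (Suc k) (v (Suc k)) = ?psi k (v (Suc k)) + a (Suc k) * (f (y k) + ?g \<bullet> (v (Suc k) - y k))"
    unfolding uagm_psi_def by simp
  have Pk': "?psi k (v k) + (nrm (v k - v (Suc k)))\<^sup>2 / 2 \<le> ?psi k (v (Suc k))"
    using vmin[of k] unfolding psi_affine by (rule strong_min[OF sc])
  have gvy: "- (dual_norm nrm ?g * nrm (v k - v (Suc k))) \<le> ?g \<bullet> (v (Suc k) - y k)"
  proof -
    have "\<bar>?g \<bullet> (v (Suc k) - v k)\<bar> \<le> dual_norm nrm ?g * nrm (v (Suc k) - v k)" by (rule dual_abs[OF norm])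
    moreover have "dual_norm nrm ?g * nrm (v (Suc k) - v k) = dual_norm nrm ?g * nrm (v k - v (Suc k))" using nrm_sym[OF norm] by simp
    moreover have "- (?g \<bullet> (v (Suc k) - v k)) \<le> \<bar>?g \<bullet> (v (Suc k) - v k)\<bar>" by simp
    moreover have "?g \<bullet> (v (Suc k) - y k) = ?g \<bullet> (v (Suc k) - v k) + ?g \<bullet> (v k - y k)"
      by (simp add: inner_diff_right)
    ultimately show ?thesis using gvy0[of k] by linarith
  qed
  have "(A k + a (Suc k)) * f (x (Suc k)) - (A k + a (Suc k)) * \<epsilon> / 2 \<le> ?psi (Suc k) (v (Suc k))"
    by (rule step_alg[OF _ _ P' Pk' gvy Suc.IH fy_le_fx])
       (use Apos[of k] eqk[of k] in auto)
  then show ?case using Asuc[of k] by simp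
qed

lemma part1: "\<forall>k\<ge>1. f (x k) - f xs \<le> bregman d gd xs (x 0) / A k + \<epsilon> / 2"
proof (intro allI impI)
  fix k :: nat assume k: "k \<ge> 1"
  then obtain j where kj: "k = Suc j" by (cases k) auto
  have Ak: "A k > 0" using Apos[of j] Asuc[of j] kj by simp
  have "uagm_psi d gd f gf (x 0) a y k (v k) \<le> uagm_psi d gd f gf (x 0) a y k xs" using vmin[of k] by blast
  also have "\<dots> \<le> bregman d gd xs (x 0) + A k * f xs"
  proof -
    have "(\<Sum>i<k. a (Suc i) * (f (y i) + gf (y i) \<bullet> (xs - y i))) \<le> (\<Sum>i<k. a (Suc i) * f xs)"
    proof (rule sum_mono)
      fix i assume "i \<in> {..<k}"
      have "f (y i) + gf (y i) \<bullet> (xs - y i) \<le> f xs" using wqc[of "y i"] by (simp add: inner_diff_right)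
      then show "a (Suc i) * (f (y i) + gf (y i) \<bullet> (xs - y i)) \<le> a (Suc i) * f xs"
        using Apos[of i] by (simp add: mult_left_mono)
    qed
    also have "\<dots> = A k * f xs" using A_sum[of k] by (simp add: sum_distrib_right)
    finally show ?thesis unfolding uagm_psi_def by simp
  qed
  finally have "A k * f (x k) - A k * \<epsilon> / 2 \<le> bregman d gd xs (x 0) + A k * f xs"
    using invariant[of k] by linarith
  then have "A k * (f (x k) - f xs - \<epsilon> / 2) \<le> bregman d gd xs (x 0)" by (simp add: algebra_simps)
  then have "f (x k) - f xs - \<epsilon> / 2 \<le> bregman d gd xs (x 0) / A k" using Ak by (simp add: field_simps)
  then show "f (x k) - f xs \<le> bregman d gd xs (x 0) / A k + \<epsilon> / 2" by simp
qed


lemma sigma_bound: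
  assumes nu: "0 \<le> \<nu>" and H: "\<forall>p q. dual_norm nrm (gf p - gf q) \<le> M * nrm (p - q) powr \<nu>"
    and s: "0 \<le> s" and u: "u \<noteq> 0"
  shows "gf (p + s *\<^sub>R u) \<bullet> u - gf p \<bullet> u \<le> M * s powr \<nu> * nrm u powr (1 + \<nu>)"
proof -
  have n: "nrm u > 0" using nrm_pos[OF norm u] .
  have "gf (p + s *\<^sub>R u) \<bullet> u - gf p \<bullet> u = (gf (p + s *\<^sub>R u) - gf p) \<bullet> u" by (simp add: inner_diff_left)
  also have "\<dots> \<le> dual_norm nrm (gf (p + s *\<^sub>R u) - gf p) * nrm u" by (rule dual_ineq[OF norm])
  also have "\<dots> \<le> M * nrm (s *\<^sub>R u) powr \<nu> * nrm u"
    using H[rule_format, of "p + s *\<^sub>R u" p] n by (simp add: mult_right_mono)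
  also have "nrm (s *\<^sub>R u) = s * nrm u" using nrm_scale[OF norm] s by simp
  also have "(s * nrm u) powr \<nu> = s powr \<nu> * nrm u powr \<nu>" using s n by (simp add: powr_mult)
  also have "M * (s powr \<nu> * nrm u powr \<nu>) * nrm u = M * s powr \<nu> * nrm u powr (1 + \<nu>)"
    using n by (simp add: powr_add)
  finally show ?thesis .
qed

lemma descent:
  assumes nu: "0 \<le> \<nu>" "\<nu> \<le> 1" and M0: "0 \<le> M"
    and H: "\<forall>p q. dual_norm nrm (gf p - gf q) \<le> M * nrm (p - q) powr \<nu>"
  shows "f (p + u) \<le> f p + gf p \<bullet> u + M / (1 + \<nu>) * nrm u powr (1 + \<nu>)"
proof (cases "u = 0")
  case True then show ?thesis by (simp add: nrm_zero[OF norm])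
next
  case u: False
  have n: "nrm u > 0" using nrm_pos[OF norm u] .
  define \<sigma> where "\<sigma> s = gf (p + s *\<^sub>R u) \<bullet> u" for s
  define \<phi> where "\<phi> s = f (p + s *\<^sub>R u)" for s
  define K where "K = M / (1 + \<nu>) * nrm u powr (1 + \<nu>)"
  have sb: "\<sigma> s - \<sigma> 0 \<le> M * s powr \<nu> * nrm u powr (1 + \<nu>)" if "0 \<le> s" for s
    using sigma_bound[OF nu(1) H that u] unfolding \<sigma>_def by simp
  show ?thesis
  proof (cases "\<nu> = 0 \<and> convex_on UNIV f \<and> (\<forall>p z. f z \<ge> f p + gf p \<bullet> (z - p))")
    case True
    then have "f p \<ge> f (p + u) + gf (p + u) \<bullet> (p - (p + u))" by blast
    then have "f (p + u) \<le> f p + \<sigma> 1" unfolding \<sigma>_def by (simp add: inner_diff_right)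
    also have "\<sigma> 1 \<le> \<sigma> 0 + M * nrm u powr (1 + \<nu>)" using sb[of 1] by simp
    finally show ?thesis using True unfolding \<sigma>_def by simp
  next
    case False
    have deriv: "(\<phi> has_real_derivative \<sigma> t) (at t)" for t
      using fclass
    proof
      assume cv: "convex_on UNIV f \<and> (\<forall>p z. f z \<ge> f p + gf p \<bullet> (z - p))"
      then have nu0: "\<nu> > 0" using False nu by auto
      show ?thesis
      proof (rule deriv_sandwich)
        fix s w
        have "f (p + w *\<^sub>R u) \<ge> f (p + s *\<^sub>R u) + gf (p + s *\<^sub>R u) \<bullet> ((p + w *\<^sub>R u) - (p + s *\<^sub>R u))"
          using cv by blast
        moreover have "(p + w *\<^sub>R u) - (p + s *\<^sub>R u) = (w - s) *\<^sub>R u" by (simp add: algebra_simps)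
        ultimately show "\<phi> w \<ge> \<phi> s + \<sigma> s * (w - s)" unfolding \<phi>_def \<sigma>_def by (simp add: mult.commute)
      next
        let ?g = "\<lambda>s. M * (\<bar>s - t\<bar> powr \<nu> * (nrm u powr \<nu> * nrm u))"
        have bnd: "norm (\<sigma> s - \<sigma> t) \<le> ?g s" for s
        proof -
          have "\<sigma> s - \<sigma> t = (gf (p + s *\<^sub>R u) - gf (p + t *\<^sub>R u)) \<bullet> u"
            unfolding \<sigma>_def by (simp add: inner_diff_left)
          then have "norm (\<sigma> s - \<sigma> t) \<le> dual_norm nrm (gf (p + s *\<^sub>R u) - gf (p + t *\<^sub>R u)) * nrm u"
            using dual_abs[OF norm] by simp
          also have "\<dots> \<le> M * nrm ((s - t) *\<^sub>R u) powr \<nu> * nrm u"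
            using H[rule_format, of "p + s *\<^sub>R u" "p + t *\<^sub>R u"] n by (simp add: mult_right_mono algebra_simps)
          also have "nrm ((s - t) *\<^sub>R u) = \<bar>s - t\<bar> * nrm u" using nrm_scale[OF norm] by simp
          also have "(\<bar>s - t\<bar> * nrm u) powr \<nu> = \<bar>s - t\<bar> powr \<nu> * nrm u powr \<nu>" using n by (simp add: powr_mult)
          finally show ?thesis by (simp add: mult.assoc)
        qed
        have "((\<lambda>s. \<bar>s - t\<bar>) \<longlongrightarrow> 0) (at t)"
          by (rule tendsto_eq_intros) (auto intro!: tendsto_eq_intros)
        then have "((\<lambda>s. \<bar>s - t\<bar> powr \<nu>) \<longlongrightarrow> 0) (at t)"
          by (rule tendsto_zero_powrI) (use nu0 in auto)
        then have "(?g \<longlongrightarrow> 0) (at t)"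
          by (intro tendsto_mult_right_zero tendsto_mult_left_zero)
        then have "((\<lambda>s. \<sigma> s - \<sigma> t) \<longlongrightarrow> 0) (at t)"
          by (rule Lim_null_comparison[rotated]) (use bnd in auto)
        then show "isCont \<sigma> t" unfolding isCont_def by (simp add: LIM_zero_iff)
      qed
    next
      assume "(\<forall>p. (f has_derivative (\<lambda>u. gf p \<bullet> u)) (at p)) \<and> continuous_on UNIV gf
                 \<and> (\<forall>p. f p - f xs \<le> gf p \<bullet> (p - xs))"
      then have fd: "(f has_derivative (\<lambda>w. gf (p + t *\<^sub>R u) \<bullet> w)) (at (p + t *\<^sub>R u))" by blast
      have ld: "((\<lambda>s. p + s *\<^sub>R u) has_derivative (\<lambda>h. h *\<^sub>R u)) (at t)"
        by (auto intro!: derivative_eq_intros)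
      have "((\<lambda>s. f (p + s *\<^sub>R u)) has_derivative (\<lambda>h. gf (p + t *\<^sub>R u) \<bullet> (h *\<^sub>R u))) (at t)"
        using has_derivative_compose[OF ld fd] by (simp add: o_def)
      moreover have "(\<lambda>h. gf (p + t *\<^sub>R u) \<bullet> (h *\<^sub>R u)) = (*) (gf (p + t *\<^sub>R u) \<bullet> u)"
        by (rule ext) simp
      ultimately show ?thesis unfolding has_field_derivative_def \<phi>_def \<sigma>_def by simp
    qed
    define \<psi> where "\<psi> t = \<phi> t - t * \<sigma> 0 - K * t powr (1 + \<nu>)" for t
    have dpsi: "(\<psi> has_real_derivative (\<sigma> t - \<sigma> 0 - K * ((1 + \<nu>) * t powr \<nu>))) (at t)" if "t > 0" for t
    proof -
      have "((\<lambda>t. t powr (1 + \<nu>)) has_real_derivative (1 + \<nu>) * t powr \<nu>) (at t)"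
        using has_real_derivative_powr[OF that, of "1 + \<nu>"] by simp
      then show ?thesis unfolding \<psi>_def
        using that by (auto intro!: derivative_eq_intros deriv)
    qed
    have cpsi: "continuous_on {0..1} \<psi>"
    proof -
      have c1: "continuous_on {0..1} \<phi>"
        using deriv by (meson DERIV_isCont continuous_at_imp_continuous_on)
      have c2: "continuous_on {0..1::real} (\<lambda>t. t powr (1 + \<nu>))"
        by (rule continuous_on_powr') (use nu in auto)
      show ?thesis unfolding \<psi>_def by (intro continuous_intros c1 c2)
    qed
    obtain l z where z: "0 < z" "z < 1" and dz: "(\<psi> has_real_derivative l) (at z)" and lz: "\<psi> 1 - \<psi> 0 = (1 - 0) * l"
      using MVT[of 0 1 \<psi>] cpsi dpsi by (auto simp: real_differentiable_def)
    have "l = \<sigma> z - \<sigma> 0 - K * ((1 + \<nu>) * z powr \<nu>)" using DERIV_unique[OF dz dpsi[OF z(1)]] .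
    moreover have "K * ((1 + \<nu>) * z powr \<nu>) = M * z powr \<nu> * nrm u powr (1 + \<nu>)"
      unfolding K_def using nu by (simp add: field_simps)
    ultimately have "l \<le> 0" using sb[of z] z by linarith
    then have "\<psi> 1 \<le> \<psi> 0" using lz by simp
    then show ?thesis unfolding \<psi>_def \<phi>_def \<sigma>_def K_def by simp
  qed
qed


lemma M_pos:
  assumes ne: "holder_consts nrm gf \<nu> \<noteq> {}"
  shows "holder_M nrm gf \<nu> > 0"
proof (rule ccontr)
  assume "\<not> ?thesis"
  then have M0: "holder_M nrm gf \<nu> = 0" using holder_M_prop[OF ne] by simp
  have const: "gf p = gf q" for p q
  proof (rule ccontr)
    assume "gf p \<noteq> gf q"
    then have "dual_norm nrm (gf p - gf q) > 0" using dual_pos[OF norm] by simp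
    moreover have "dual_norm nrm (gf p - gf q) \<le> 0" using holder_M_prop[OF ne] M0 by simp
    ultimately show False by simp
  qed
  define g where "g = gf (y 0)"
  have g: "g \<noteq> 0" using nonzero g_def by simp
  have "f (xs - g) - f xs \<le> gf (xs - g) \<bullet> (xs - g - xs)" by (rule wqc)
  also have "\<dots> = - (g \<bullet> g)" using const[of "xs - g" "y 0"] g_def by simp
  finally have "f (xs - g) - f xs \<le> - (g \<bullet> g)" .
  moreover have "g \<bullet> g > 0" using g by simp
  ultimately have "f (xs - g) < f xs" by linarith
  then show False using xs_min by (meson not_le)
qed

lemma step_ineq:
  assumes nu: "0 \<le> \<nu>" "\<nu> \<le> 1" and ne: "holder_consts nrm gf \<nu> \<noteq> {}" and t: "t \<ge> 0"
  shows "t * dual_norm nrm (gf (y k)) - holder_M nrm gf \<nu> / (1 + \<nu>) * t powr (1 + \<nu>)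
     \<le> a (Suc k) / A (Suc k) * a (Suc k) * (dual_norm nrm (gf (y k)))\<^sup>2 / 2 - \<epsilon> * (a (Suc k) / A (Suc k)) / 2"
proof -
  let ?M = "holder_M nrm gf \<nu>" and ?g = "gf (y k)" and ?s = "sharp (gf (y k))"
  let ?r = "dual_norm nrm (gf (y k))"
  have MH: "0 \<le> ?M" "\<forall>p q. dual_norm nrm (gf p - gf q) \<le> ?M * nrm (p - q) powr \<nu>"
    using holder_M_prop[OF ne] by auto
  have "f (x (Suc k)) \<le> f (y k - t *\<^sub>R ?s)" using tmin[of k] xdef[of k] t by simp
  also have "\<dots> = f (y k + (- (t *\<^sub>R ?s)))" by simp
  also have "\<dots> \<le> f (y k) + ?g \<bullet> (- (t *\<^sub>R ?s)) + ?M / (1 + \<nu>) * nrm (- (t *\<^sub>R ?s)) powr (1 + \<nu>)"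
    by (rule descent[OF nu MH])
  also have "?g \<bullet> (- (t *\<^sub>R ?s)) = - t * ?r" using sharp by simp
  also have "nrm (- (t *\<^sub>R ?s)) powr (1 + \<nu>) \<le> t powr (1 + \<nu>)"
  proof -
    have "nrm (- (t *\<^sub>R ?s)) = t * nrm ?s" using nrm_minus[OF norm] nrm_scale[OF norm] t by simp
    also have "\<dots> \<le> t" using sharp t by (simp add: mult_left_le)
    finally have "nrm (- (t *\<^sub>R ?s)) \<le> t" .
    then show ?thesis by (intro powr_mono2) (use nu nrm_nonneg[OF norm] in auto)
  qed
  then have "?M / (1 + \<nu>) * nrm (- (t *\<^sub>R ?s)) powr (1 + \<nu>) \<le> ?M / (1 + \<nu>) * t powr (1 + \<nu>)"
    by (rule mult_left_mono) (use MH nu in auto)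
  finally have up: "f (x (Suc k)) \<le> f (y k) - t * ?r + ?M / (1 + \<nu>) * t powr (1 + \<nu>)" by simp
  have Ap: "A (Suc k) > 0" using Apos[of k] Asuc[of k] by simp
  have e1: "(a (Suc k))\<^sup>2 / (2 * (A k + a (Suc k))) * ?r\<^sup>2 = a (Suc k) / A (Suc k) * a (Suc k) * ?r\<^sup>2 / 2"
    using Asuc[of k] Ap by (simp add: power2_eq_square)
  have e2: "\<epsilon> * a (Suc k) / (2 * (A k + a (Suc k))) = \<epsilon> * (a (Suc k) / A (Suc k)) / 2"
    using Asuc[of k] by simp
  show ?thesis using eqk[of k] up unfolding e1 e2 by linarith
qed


lemma step_log:
  assumes nu: "0 \<le> \<nu>" "\<nu> \<le> 1" and ne: "holder_consts nrm gf \<nu> \<noteq> {}"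
  shows "(- 2 * ln (holder_M nrm gf \<nu>) - (1 - \<nu>) * ln ((1 - \<nu>) / (1 + \<nu>)) + (1 - \<nu>) * ln \<epsilon>) / (1 + 3 * \<nu>)
     \<le> ln (a (Suc k) / A (Suc k)) + (1 + \<nu>) / (1 + 3 * \<nu>) * ln (A (Suc k))"
proof -
  define M where "M = holder_M nrm gf \<nu>"
  define r where "r = dual_norm nrm (gf (y k))"
  define A' where "A' = A (Suc k)"
  define \<tau> where "\<tau> = a (Suc k) / A (Suc k)"
  have M: "M > 0" unfolding M_def by (rule M_pos[OF ne])
  have r: "r > 0" unfolding r_def by (rule G_pos)
  have A': "A' > 0" unfolding A'_def using Apos[of k] Asuc[of k] by simp
  have \<tau>: "\<tau> > 0" unfolding \<tau>_def using Apos[of k] A' A'_def by simp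
  have a\<tau>: "a (Suc k) = \<tau> * A'" unfolding \<tau>_def A'_def using A' A'_def by simp
  define p where "p = (1 + \<nu>) / 2"
  define lL where "lL = (ln M + (1 - p) * (ln (1 - p) - ln p - ln (\<epsilon> * \<tau>))) / p"
  define L where "L = exp lL"
  have L: "L > 0" unfolding L_def by simp
  define t where "t = r / L"
  have t: "t \<ge> 0" unfolding t_def using r L by simp
  have SI: "t * r - M / (1 + \<nu>) * t powr (1 + \<nu>) \<le> \<tau> * a (Suc k) * r\<^sup>2 / 2 - \<epsilon> * \<tau> / 2"
    using step_ineq[OF nu ne t, of k] unfolding M_def r_def \<tau>_def .
  have YB: "M / (1 + \<nu>) * t powr (1 + \<nu>) \<le> L / 2 * t\<^sup>2 + \<epsilon> * \<tau> / 2"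
  proof (cases "\<nu> = 1")
    case True
    have "t powr (1 + \<nu>) = t\<^sup>2" using True t
      by (cases "t = 0") (simp_all add: powr_realpow)
    moreover have "L = M" unfolding L_def lL_def p_def using True M by simp
    ultimately show ?thesis using True eps \<tau> by simp
  next
    case False
    then have "\<nu> < 1" using nu by simp
    from young_nu[OF nu(1) this M _ t, of "\<epsilon> * \<tau>"] eps \<tau>
    show ?thesis unfolding L_def lL_def p_def by simp
  qed
  have "t * r = r\<^sup>2 / L" "L / 2 * t\<^sup>2 = r\<^sup>2 / (2 * L)" unfolding t_def using L by (simp_all add: power2_eq_square)
  then have "r\<^sup>2 / (2 * L) \<le> \<tau> * a (Suc k) * r\<^sup>2 / 2" using SI YB by (simp add: field_simps)
  then have "1 / L \<le> \<tau> * a (Suc k)" using r L by (simp add: field_simps)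
  then have "1 / L \<le> \<tau>\<^sup>2 * A'" unfolding a\<tau> by (simp add: power2_eq_square mult.assoc)
  then have "ln (1 / L) \<le> ln (\<tau>\<^sup>2 * A')" using L by (subst ln_le_cancel_iff) (use \<tau> A' in auto)
  then have H: "- lL \<le> 2 * ln \<tau> + ln A'" using \<tau> A' unfolding L_def by (simp add: ln_mult ln_realpow ln_div)
  define lw where "lw = ln ((1 - \<nu>) / (1 + \<nu>))"
  have e: "(1 + \<nu>) * lL = 2 * ln M + (1 - \<nu>) * (lw - ln \<epsilon> - ln \<tau>)"
  proof (cases "\<nu> = 1")
    case True then show ?thesis unfolding lL_def p_def by simp
  next
    case False
    then have nu1: "\<nu> < 1" using nu by simp
    have pp: "p > 0" unfolding p_def using nu by simp
    have p1: "1 - p > 0" unfolding p_def using nu1 by simp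
    have pq: "(1 - p) / p = (1 - \<nu>) / (1 + \<nu>)" unfolding p_def using nu by (simp add: field_simps)
    have "(1 + \<nu>) * lL = 2 * (p * lL)" unfolding p_def by simp
    also have "p * lL = ln M + (1 - p) * (ln (1 - p) - ln p - ln (\<epsilon> * \<tau>))" unfolding lL_def using pp by simp
    also have "ln (1 - p) - ln p = lw" unfolding lw_def pq[symmetric] using pp p1 by (simp add: ln_div)
    also have "ln (\<epsilon> * \<tau>) = ln \<epsilon> + ln \<tau>" using eps \<tau> by (simp add: ln_mult)
    also have "2 * (ln M + (1 - p) * (lw - (ln \<epsilon> + ln \<tau>))) = 2 * ln M + (2 * (1 - p)) * (lw - ln \<epsilon> - ln \<tau>)"
      by (simp add: algebra_simps)
    also have "2 * (1 - p) = 1 - \<nu>" unfolding p_def by (simp add: field_simps)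
    finally show ?thesis .
  qed
  have H1: "(1 + \<nu>) * (- lL) \<le> (1 + \<nu>) * (2 * ln \<tau> + ln A')" by (rule mult_left_mono[OF H]) (use nu in simp)
  have E1: "(1 + \<nu>) * (2 * ln \<tau> + ln A') = 2 * ln \<tau> + 2 * (\<nu> * ln \<tau>) + ln A' + \<nu> * ln A'" by (simp add: algebra_simps)
  have E2: "(1 + \<nu>) * (- lL) = - ((1 + \<nu>) * lL)" by simp
  have E3: "(1 - \<nu>) * (lw - ln \<epsilon> - ln \<tau>) = lw - \<nu> * lw - ln \<epsilon> + \<nu> * ln \<epsilon> - ln \<tau> + \<nu> * ln \<tau>" by (simp add: algebra_simps)
  have E4: "(1 + 3 * \<nu>) * ln \<tau> + (1 + \<nu>) * ln A' = ln \<tau> + 3 * (\<nu> * ln \<tau>) + ln A' + \<nu> * ln A'"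
    "(1 - \<nu>) * lw = lw - \<nu> * lw" "(1 - \<nu>) * ln \<epsilon> = ln \<epsilon> - \<nu> * ln \<epsilon>" by (simp_all add: algebra_simps)
  have key: "- 2 * ln M - (1 - \<nu>) * lw + (1 - \<nu>) * ln \<epsilon> \<le> (1 + 3 * \<nu>) * ln \<tau> + (1 + \<nu>) * ln A'"
    using H1 E1 E2 E3 E4 e by (smt (verit))
  have d: "1 + 3 * \<nu> > 0" using nu by simp
  have "(1 + 3 * \<nu>) * ln \<tau> + (1 + \<nu>) * ln A' = (ln \<tau> + (1 + \<nu>) / (1 + 3 * \<nu>) * ln A') * (1 + 3 * \<nu>)"
    using d by (simp add: field_simps)
  with key have "(- 2 * ln M - (1 - \<nu>) * lw + (1 - \<nu>) * ln \<epsilon>) / (1 + 3 * \<nu>) \<le> ln \<tau> + (1 + \<nu>) / (1 + 3 * \<nu>) * ln A'"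
    using d by (simp add: pos_divide_le_eq)
  then show ?thesis unfolding M_def lw_def \<tau>_def A'_def .
qed


lemma step_pow:
  assumes nu: "0 \<le> \<nu>" "\<nu> \<le> 1" and ne: "holder_consts nrm gf \<nu> \<noteq> {}"
  shows "A k powr ((1 + \<nu>) / (1 + 3 * \<nu>)) + (1 + \<nu>) / (1 + 3 * \<nu>) *
      exp ((- 2 * ln (holder_M nrm gf \<nu>) - (1 - \<nu>) * ln ((1 - \<nu>) / (1 + \<nu>)) + (1 - \<nu>) * ln \<epsilon>) / (1 + 3 * \<nu>))
    \<le> A (Suc k) powr ((1 + \<nu>) / (1 + 3 * \<nu>))"
proof -
  define q where "q = (1 + \<nu>) / (1 + 3 * \<nu>)"
  define lC where "lC = (- 2 * ln (holder_M nrm gf \<nu>) - (1 - \<nu>) * ln ((1 - \<nu>) / (1 + \<nu>)) + (1 - \<nu>) * ln \<epsilon>) / (1 + 3 * \<nu>)"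
  define A' where "A' = A (Suc k)"
  define \<tau> where "\<tau> = a (Suc k) / A (Suc k)"
  have q: "0 < q" "q \<le> 1" unfolding q_def using nu by auto
  have A': "A' > 0" unfolding A'_def using Apos[of k] Asuc[of k] by simp
  have \<tau>: "\<tau> > 0" unfolding \<tau>_def using Apos[of k] A' A'_def by simp
  have \<tau>1: "\<tau> \<le> 1" unfolding \<tau>_def using Apos[of k] Asuc[of k] by simp
  have "lC \<le> ln \<tau> + q * ln A'" using step_log[OF nu ne, of k] unfolding lC_def q_def \<tau>_def A'_def .
  also have "\<dots> = ln (\<tau> * A' powr q)" using \<tau> A' by (simp add: ln_mult)
  finally have lc: "lC \<le> ln (\<tau> * A' powr q)" .
  have pos: "\<tau> * A' powr q > 0" using \<tau> A' by simp
  have "exp lC \<le> exp (ln (\<tau> * A' powr q))" using lc by simp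
  then have "exp lC \<le> \<tau> * A' powr q" using exp_ln[OF pos] by simp
  have Ak: "A k = A' * (1 - \<tau>)" unfolding A'_def \<tau>_def using Asuc[of k] A' A'_def by (simp add: field_simps)
  have "(1 - \<tau>) powr q \<le> 1 - q * \<tau>"
  proof (cases "\<tau> = 1")
    case True then show ?thesis using q by simp
  next
    case False
    then have "(1 - \<tau>) powr q * 1 powr (1 - q) \<le> q * (1 - \<tau>) + (1 - q) * 1"
      using \<tau>1 q by (intro Youngs_inequality_0) auto
    then show ?thesis by (simp add: algebra_simps)
  qed
  then have "A k powr q \<le> A' powr q * (1 - q * \<tau>)"
    unfolding Ak using \<tau>1 A' by (simp add: powr_mult mult_left_mono)
  also have "\<dots> = A' powr q - q * (\<tau> * A' powr q)" by (simp add: algebra_simps)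
  finally have "A k powr q + q * exp lC \<le> A' powr q"
    using \<open>exp lC \<le> \<tau> * A' powr q\<close> q mult_left_mono[of "exp lC" "\<tau> * A' powr q" q] by linarith
  then show ?thesis unfolding q_def lC_def A'_def .
qed

lemma sum_pow:
  assumes nu: "0 \<le> \<nu>" "\<nu> \<le> 1" and ne: "holder_consts nrm gf \<nu> \<noteq> {}"
  shows "real N * ((1 + \<nu>) / (1 + 3 * \<nu>) *
      exp ((- 2 * ln (holder_M nrm gf \<nu>) - (1 - \<nu>) * ln ((1 - \<nu>) / (1 + \<nu>)) + (1 - \<nu>) * ln \<epsilon>) / (1 + 3 * \<nu>)))
    \<le> A N powr ((1 + \<nu>) / (1 + 3 * \<nu>))"
  by (rule sum_lin[where P="\<lambda>k. A k powr ((1 + \<nu>) / (1 + 3 * \<nu>))"]) (use step_pow[OF nu ne] A0 in auto)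


lemma part2:
  assumes nu: "0 \<le> \<nu>" "\<nu> \<le> 1" and ne: "holder_consts nrm gf \<nu> \<noteq> {}"
    and bnd: "real N \<ge> uagm_bound \<nu> (holder_M nrm gf \<nu>) \<epsilon> \<Theta>"
  shows "f (x N) - f xs \<le> \<epsilon>"
proof -
  define M where "M = holder_M nrm gf \<nu>"
  define V where "V = bregman d gd xs (x 0)"
  have M: "M > 0" unfolding M_def by (rule M_pos[OF ne])
  have Vlow: "(nrm (xs - x 0))\<^sup>2 / 2 \<le> V" unfolding V_def by (rule bregman_lower[OF prox norm])
  have AN: "A N > 0" if N1: "N \<ge> 1" for N
  proof -
    obtain j where j: "N = Suc j" using N1 by (cases N) auto
    have "A (Suc j) > 0" using Apos[of j] Asuc[of j] by linarith
    then show ?thesis unfolding j .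
  qed
  show ?thesis
  proof (cases "\<Theta> \<le> 0")
    case True
    then have V0: "V \<le> 0" using Theta V_def by simp
    show ?thesis
    proof (cases "N = 0")
      case True
      have "(nrm (xs - x 0))\<^sup>2 \<le> 0" using Vlow V0 by linarith
      then have "nrm (xs - x 0) = 0" by simp
      then have "xs = x 0" using norm unfolding is_norm_def by simp
      then show ?thesis using True eps by simp
    next
      case False
      then have N1: "N \<ge> 1" by simp
      have "f (x N) - f xs \<le> V / A N + \<epsilon> / 2" using part1 N1 unfolding V_def by blast
      moreover have "V / A N \<le> 0" using V0 AN[OF N1] by (simp add: divide_nonpos_pos)
      ultimately show ?thesis using eps by linarith
    qed
  next
    case False
    then have T: "\<Theta> > 0" by simp
    define q where "q = (1 + \<nu>) / (1 + 3 * \<nu>)"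
    define lC where "lC = (- 2 * ln M - (1 - \<nu>) * ln ((1 - \<nu>) / (1 + \<nu>)) + (1 - \<nu>) * ln \<epsilon>) / (1 + 3 * \<nu>)"
    define W where "W = (if \<nu> = 1 then 1 else ((1 - \<nu>) / (1 + \<nu>)) powr ((1 - \<nu>) / (1 + 3 * \<nu>)))"
    have q: "0 < q" "q \<le> 1" "1 \<le> 2 * q" unfolding q_def using nu by auto
    have W: "W > 0" unfolding W_def using nu by auto
    have lW: "ln W = (1 - \<nu>) / (1 + 3 * \<nu>) * ln ((1 - \<nu>) / (1 + \<nu>))" unfolding W_def by simp
    have bdef: "uagm_bound \<nu> M \<epsilon> \<Theta> = 2 powr ((2 + 4 * \<nu>) / (1 + 3 * \<nu>)) * W * (M / \<epsilon>) powr (2 / (1 + 3 * \<nu>)) * \<Theta> powr q"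
      unfolding uagm_bound_def W_def q_def ..
    have bpos: "uagm_bound \<nu> M \<epsilon> \<Theta> > 0" unfolding bdef using W M eps T by simp
    have lb: "ln (uagm_bound \<nu> M \<epsilon> \<Theta>) = (2 + 4 * \<nu>) / (1 + 3 * \<nu>) * ln 2 + (1 - \<nu>) / (1 + 3 * \<nu>) * ln ((1 - \<nu>) / (1 + \<nu>))
       + 2 / (1 + 3 * \<nu>) * (ln M - ln \<epsilon>) + q * ln \<Theta>"
      unfolding bdef using W M eps T by (simp add: ln_mult ln_div lW)
    have Npos: "real N > 0" using bnd bpos M_def by simp
    then have N1: "N \<ge> 1" by simp
    have lN: "ln (uagm_bound \<nu> M \<epsilon> \<Theta>) \<le> ln (real N)" using bnd bpos M_def by simp
    have sp: "real N * (q * exp lC) \<le> A N powr q" using sum_pow[OF nu ne, of N] unfolding q_def lC_def M_def .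
    have "ln (real N * (q * exp lC)) \<le> ln (A N powr q)" using sp Npos q AN[OF N1] by (subst ln_le_cancel_iff) auto
    then have h1: "ln (real N) + ln q + lC \<le> q * ln (A N)" using Npos q by (simp add: ln_mult)
    have idt: "(2 + 4 * \<nu>) / (1 + 3 * \<nu>) * ln 2 + (1 - \<nu>) / (1 + 3 * \<nu>) * ln ((1 - \<nu>) / (1 + \<nu>)) + 2 / (1 + 3 * \<nu>) * (ln M - ln \<epsilon>)
      + q * ln \<Theta> + lC - q * (ln 2 + ln \<Theta> - ln \<epsilon>) = ln 2"
      unfolding lC_def q_def by (rule log_identity[OF nu(1)])
    have "ln 2 + ln q = ln (2 * q)" using q by (simp add: ln_mult)
    also have "ln (2 * q) \<ge> 0" using q by simp
    finally have "ln 2 + ln q \<ge> 0" .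
    then have "q * (ln 2 + ln \<Theta> - ln \<epsilon>) \<le> q * ln (A N)" using h1 idt lb lN by linarith
    then have "ln 2 + ln \<Theta> - ln \<epsilon> \<le> ln (A N)" using q by simp
    then have "ln (2 * \<Theta> / \<epsilon>) \<le> ln (A N)" using T eps by (simp add: ln_mult ln_div)
    then have ANb: "2 * \<Theta> / \<epsilon> \<le> A N" using T eps AN[OF N1] by simp
    have "f (x N) - f xs \<le> V / A N + \<epsilon> / 2" using part1 N1 unfolding V_def by blast
    moreover have "V / A N \<le> \<Theta> / A N" using Theta AN[OF N1] unfolding V_def by (simp add: divide_right_mono)
    moreover have "\<Theta> / A N \<le> \<epsilon> / 2" using ANb AN[OF N1] eps by (simp add: field_simps)
    ultimately show ?thesis by linarith
  qed
qed

end


theorem mainTheorem10: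
  fixes nrm :: "'a::euclidean_space \<Rightarrow> real"
    and d :: "'a \<Rightarrow> real" and gd :: "'a \<Rightarrow> 'a"
    and sharp :: "'a \<Rightarrow> 'a"
    and f :: "'a \<Rightarrow> real" and gf :: "'a \<Rightarrow> 'a"
    and xs :: 'a and \<epsilon> \<Theta> :: real
    and x v y :: "nat \<Rightarrow> 'a" and \<beta> h a A :: "nat \<Rightarrow> real"
  assumes norm: "is_norm nrm"
    and prox: "prox_function nrm d gd"
    and sharp: "\<forall>g. nrm (sharp g) \<le> 1 \<and> g \<bullet> sharp g = dual_norm nrm g"
    and fclass: "(convex_on UNIV f \<and> (\<forall>p z. f z \<ge> f p + gf p \<bullet> (z - p)))
              \<or> ((\<forall>p. (f has_derivative (\<lambda>u. gf p \<bullet> u)) (at p)) \<and> continuous_on UNIV gf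
                 \<and> (\<forall>p. f p - f xs \<le> gf p \<bullet> (p - xs)))"
    and xs_min: "\<forall>z. f xs \<le> f z"
    and eps: "\<epsilon> > 0"
    and Theta: "\<Theta> \<ge> bregman d gd xs (x 0)"
    and iter: "uagm_iterates nrm d gd sharp f gf \<epsilon> x v y \<beta> h a A"
    and nonzero: "\<forall>k. gf (y k) \<noteq> 0"
  shows "(\<forall>k\<ge>1. f (x k) - f xs \<le> bregman d gd xs (x 0) / A k + \<epsilon> / 2)
       \<and> (\<forall>\<nu> (N::nat). 0 \<le> \<nu> \<and> \<nu> \<le> 1 \<and> holder_consts nrm gf \<nu> \<noteq> {}
            \<and> real N \<ge> uagm_bound \<nu> (holder_M nrm gf \<nu>) \<epsilon> \<Theta>
            \<longrightarrow> f (x N) - f xs \<le> \<epsilon>)"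
proof -
  interpret U: uagm nrm d gd sharp f gf xs \<epsilon> \<Theta> x v y \<beta> h a A
    by unfold_locales (use assms in auto)
  show ?thesis using U.part1 U.part2 by blast
qed

end
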